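(* The AMC (allocating marginal contributions) policy has competitive ratio $\alpha=\frac{2\mathsf{min}}{\mathsf{max}}$ with respect to greedy players when the characteristic functions range over $V_{\ge2}$.
   Context: Players: a finite set $N=\{a_1,\dots,a_n\}$. A characteristic function is $v:2^N\to\mathbb{R}_{\ge 0}$ with $v(\emptyset)=0$. There are fixed, known constants $0<\mathsf{min}\le\mathsf{max}$ and every $v$ considered is monotone and bounded: $\mathsf{min}\le v(S)\le v(T)\le\mathsf{max}$ for all nonempty $S\subseteq T\subseteq N$. For an integer $\delta\ge1$, $V_\delta$ denotes the set of such $v$ with $\delta\cdot\mathsf{min}\le\mathsf{max}<(\delta+1)\cdot\mathsf{min}$, and $V_{\ge2}=\bigcup_{\delta\ge2}V_\delta$. A coalition structure is a partition $C$ of $N$; its social welfare is $\mathsf{SW}(C\mid v)=\sum_{S\in C}v(S)$. Online process: an arrival order is a permutation $\pi=(\pi_1,\dots,\pi_n)$ of $N$; player $\pi_t$ arrives at time $t$; $\pi_{\prec t}$ is the set of players arriving before time $t$ and $\pi^{-1}(i)$ is the arrival time of $i$. For $S\subseteq N$, $\pi_{|S}$ denotes the players of $S$ in the relative order of $\pi$. Let $C^{t-1}$ be the coalition structure of players arrived before time $t$ ($C^0=\emptyset$). At time $t$, player $\pi_t$ either joins an existing coalition $S\in C^{t-1}$ or forms $\{\pi_t\}$ (choice $S=\emptyset$); decisions are never revised. A distribution policy $\varphi$ assigns to every $S\subseteq N$ and order $\pi_{|S}$ a vector $(\varphi_i(S,\pi_{|S}))_{i\in S}$ summing to $v(S)$.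 The AMC policy is $\varphi_i(S,\pi_{|S})=v\big((\pi_{\prec\pi^{-1}(i)}\cap S)\cup\{i\}\big)-v\big(\pi_{\prec\pi^{-1}(i)}\cap S\big)$ for $i\in S$ (each player receives her marginal contribution at the time she joins). Greedy players: $\pi_t$ chooses $S^*\in\arg\max_{S\in C^{t-1}\cup\{\emptyset\}}\varphi_{\pi_t}(S\cup\{\pi_t\},\pi_{|S\cup\{\pi_t\}})$ (predetermined tie-breaking). $C_g(v,\pi\mid\varphi)$ is the final structure. The competitive ratio over a class is $\alpha=\inf_{v,\pi}\mathsf{SW}(C_g(v,\pi\mid\varphi))/\max_C\mathsf{SW}(C\mid v)$, over $v$ in the class and all arrival orders $\pi$. *)

theory Defs
  imports "HOL-Analysis.Analysis" "HOL-Library.Disjoint_Sets"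
begin

definition players :: "nat \<Rightarrow> nat set" where
  "players n = {0..<n}"

definition arrival_order :: "nat \<Rightarrow> nat list \<Rightarrow> bool" where
  "arrival_order n \<pi> \<longleftrightarrow> distinct \<pi> \<and> set \<pi> = players n"

definition before :: "nat list \<Rightarrow> nat \<Rightarrow> nat set" where
  "before \<pi> i = set (takeWhile (\<lambda>j. j \<noteq> i) \<pi>)"

definition valid_cf :: "real \<Rightarrow> real \<Rightarrow> nat \<Rightarrow> (nat set \<Rightarrow> real) \<Rightarrow> bool" where
  "valid_cf mn mx n v \<longleftrightarrow> v {} = 0 \<and>
     (\<forall>S T. S \<noteq> {} \<and> S \<subseteq> T \<and> T \<subseteq> players n \<longrightarrow> mn \<le> v S \<and> v S \<le> v T \<and> v T \<le> mx)"

text \<open>The class V_delta and V_{>=2} (membership depends only on the constants).\<close>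
definition V_delta :: "real \<Rightarrow> real \<Rightarrow> nat \<Rightarrow> nat \<Rightarrow> (nat set \<Rightarrow> real) \<Rightarrow> bool" where
  "V_delta mn mx \<delta> n v \<longleftrightarrow> valid_cf mn mx n v \<and> real \<delta> * mn \<le> mx \<and> mx < (real \<delta> + 1) * mn"

definition V_ge2 :: "real \<Rightarrow> real \<Rightarrow> nat \<Rightarrow> (nat set \<Rightarrow> real) \<Rightarrow> bool" where
  "V_ge2 mn mx n v \<longleftrightarrow> (\<exists>\<delta>\<ge>2. V_delta mn mx \<delta> n v)"

definition amc :: "(nat set \<Rightarrow> real) \<Rightarrow> nat list \<Rightarrow> nat set \<Rightarrow> nat \<Rightarrow> real" where
  "amc v \<pi> S i = v ((before \<pi> i \<inter> S) \<union> {i}) - v (before \<pi> i \<inter> S)"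

text \<open>A tie-breaking rule picks, given the current structure, the arriving player and
  the set of maximising options, one of those options.\<close>
definition valid_tb :: "(nat set set \<Rightarrow> nat \<Rightarrow> nat set set \<Rightarrow> nat set) \<Rightarrow> bool" where
  "valid_tb tb \<longleftrightarrow> (\<forall>C i A. A \<noteq> {} \<longrightarrow> tb C i A \<in> A)"

definition greedy_step ::
  "(nat set \<Rightarrow> real) \<Rightarrow> nat list \<Rightarrow> (nat set set \<Rightarrow> nat \<Rightarrow> nat set set \<Rightarrow> nat set)
   \<Rightarrow> nat set set \<Rightarrow> nat \<Rightarrow> nat set set" where
  "greedy_step v \<pi> tb C i =
     (let opts = C \<union> {{}};
          val = (\<lambda>S. amc v \<pi> (S \<union> {i}) i);
          A = {S \<in> opts. \<forall>S'\<in>opts. val S' \<le> val S};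
          S' = tb C i A
      in (C - {S'}) \<union> {S' \<union> {i}})"

fun greedy_run ::
  "(nat set \<Rightarrow> real) \<Rightarrow> nat list \<Rightarrow> (nat set set \<Rightarrow> nat \<Rightarrow> nat set set \<Rightarrow> nat set)
   \<Rightarrow> nat set set \<Rightarrow> nat list \<Rightarrow> nat set set" where
  "greedy_run v \<pi> tb C [] = C"
| "greedy_run v \<pi> tb C (i # is) = greedy_run v \<pi> tb (greedy_step v \<pi> tb C i) is"

definition greedy_cs ::
  "(nat set \<Rightarrow> real) \<Rightarrow> nat list \<Rightarrow> (nat set set \<Rightarrow> nat \<Rightarrow> nat set set \<Rightarrow> nat set) \<Rightarrow> nat set set" where
  "greedy_cs v \<pi> tb = greedy_run v \<pi> tb {} \<pi>"

definition SW :: "(nat set \<Rightarrow> real) \<Rightarrow> nat set set \<Rightarrow> real" where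
  "SW v C = (\<Sum>S\<in>C. v S)"

definition OPT :: "(nat set \<Rightarrow> real) \<Rightarrow> nat \<Rightarrow> real" where
  "OPT v n = Max (SW v ` {C. partition_on (players n) C})"

definition comp_ratio_ge2 ::
  "real \<Rightarrow> real \<Rightarrow> (nat set set \<Rightarrow> nat \<Rightarrow> nat set set \<Rightarrow> nat set) \<Rightarrow> real" where
  "comp_ratio_ge2 mn mx tb =
     Inf {SW v (greedy_cs v \<pi> tb) / OPT v n | n v \<pi>.
            n \<ge> 1 \<and> V_ge2 mn mx n v \<and> arrival_order n \<pi>}"

end

theory Submission imports Defs begin

lemma before_split:
  assumes "distinct (ys @ i # zs)"
  shows "before (ys @ i # zs) i = set ys"
proof -
  have "\<forall>x\<in>set ys. x \<noteq> i" using assms by auto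
  then have "takeWhile (\<lambda>j. j \<noteq> i) (ys @ i # zs) = ys @ takeWhile (\<lambda>j. j \<noteq> i) (i # zs)"
    by (induction ys) auto
  then show ?thesis by (simp add: before_def)
qed

lemma before_notin: "i \<notin> before \<pi> i"
  by (auto simp: before_def dest: set_takeWhileD)

lemma amc_simp:
  assumes "S \<subseteq> before \<pi> i"
  shows "amc v \<pi> (S \<union> {i}) i = v (S \<union> {i}) - v S"
proof -
  have "before \<pi> i \<inter> (S \<union> {i}) = S" using assms before_notin[of i \<pi>] by auto
  then show ?thesis by (simp add: amc_def)
qed

lemma greedy_run_append:
  "greedy_run v \<pi> tb C (xs @ ys) = greedy_run v \<pi> tb (greedy_run v \<pi> tb C xs) ys"
  by (induction xs arbitrary: C) auto

lemma step_inv: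
  assumes pi: "\<pi> = ys @ i # zs" and dist: "distinct \<pi>" and tb: "valid_tb tb"
    and fin: "finite C" and sub: "\<forall>S\<in>C. S \<subseteq> set ys" and ne: "{} \<notin> C"
    and sp: "sum p (set ys) = SW v C" and pge: "\<forall>j\<in>set ys. v {j} \<le> p j"
    and v0: "v {} = 0"
  shows "finite (greedy_step v \<pi> tb C i) \<and> (\<forall>S\<in>greedy_step v \<pi> tb C i. S \<subseteq> set (ys @ [i])) \<and>
     {} \<notin> greedy_step v \<pi> tb C i \<and>
     (\<exists>q. sum q (set (ys @ [i])) = SW v (greedy_step v \<pi> tb C i) \<and> (\<forall>j\<in>set (ys @ [i]). v {j} \<le> q j))"
proof -
  define C1 where "C1 = greedy_step v \<pi> tb C i"
  define opts where "opts = C \<union> {{}}"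
  define val where "val = (\<lambda>S. amc v \<pi> (S \<union> {i}) i)"
  define A where "A = {S \<in> opts. \<forall>S'\<in>opts. val S' \<le> val S}"
  define S' where "S' = tb C i A"
  have C1: "C1 = (C - {S'}) \<union> {S' \<union> {i}}"
    unfolding C1_def greedy_step_def Let_def S'_def A_def val_def opts_def by simp
  have dist': "distinct (ys @ i # zs)" using dist pi by simp
  have bef: "before \<pi> i = set ys" using before_split[OF dist'] pi by simp
  have iny: "i \<notin> set ys" using dist' by simp
  have finopts: "finite opts" "opts \<noteq> {}" using fin by (auto simp: opts_def)
  have "Max (val ` opts) \<in> val ` opts" using finopts by (intro Max_in) auto
  then obtain X where X: "X \<in> opts" "val X = Max (val ` opts)" by auto
  have "X \<in> A" unfolding A_def using X finopts by auto
  then have "A \<noteq> {}" by auto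
  then have "S' \<in> A" using tb unfolding valid_tb_def S'_def by auto
  then have S'o: "S' \<in> opts" and S'max: "\<forall>T\<in>opts. val T \<le> val S'" unfolding A_def by auto
  have S'sub: "S' \<subseteq> set ys" using S'o sub opts_def by auto
  have valS': "val S' = v (S' \<union> {i}) - v S'"
    unfolding val_def by (rule amc_simp) (use S'sub bef in auto)
  have val0: "val {} = v {i}"
    using amc_simp[of "{}" \<pi> i v] v0 unfolding val_def by simp
  have ge: "v {i} \<le> val S'" using S'max val0 opts_def by auto
  have notin: "S' \<union> {i} \<notin> C - {S'}" using sub iny by auto
  have SW1: "SW v C1 = SW v (C - {S'}) + v (S' \<union> {i})"
    unfolding C1 SW_def using fin notin by (simp add: sum.union_disjoint)
  have SW2: "SW v (C - {S'}) = SW v C - v S'"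
  proof (cases "S' \<in> C")
    case True then show ?thesis unfolding SW_def using fin by (simp add: sum_diff1)
  next
    case False
    then have "S' = {}" using S'o opts_def by auto
    then show ?thesis using False v0 by simp
  qed
  define q where "q = p(i := val S')"
  have "sum q (set (ys @ [i])) = sum q (set ys) + q i"
    using iny by simp
  also have "sum q (set ys) = sum p (set ys)"
    unfolding q_def using iny by (intro sum.cong) auto
  finally have "sum q (set (ys @ [i])) = SW v C1"
    using sp SW1 SW2 valS' q_def by simp
  moreover have "\<forall>j\<in>set (ys @ [i]). v {j} \<le> q j" using pge ge iny q_def by auto
  moreover have "finite C1" using fin C1 by simp
  moreover have "\<forall>S\<in>C1. S \<subseteq> set (ys @ [i])" using C1 sub S'sub by auto
  moreover have "{} \<notin> C1" using C1 ne by auto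
  ultimately show ?thesis unfolding C1_def by blast
qed

lemma run_inv:
  assumes "distinct \<pi>" and tb: "valid_tb tb" and v0: "v {} = 0"
  shows "\<pi> = ys @ xs \<Longrightarrow> finite C \<Longrightarrow> \<forall>S\<in>C. S \<subseteq> set ys \<Longrightarrow> {} \<notin> C \<Longrightarrow>
    sum p (set ys) = SW v C \<Longrightarrow> \<forall>j\<in>set ys. v {j} \<le> p j \<Longrightarrow>
    \<exists>q. sum q (set \<pi>) = SW v (greedy_run v \<pi> tb C xs) \<and> (\<forall>j\<in>set \<pi>. v {j} \<le> q j)"
proof (induction xs arbitrary: ys C p)
  case Nil
  then have "set \<pi> = set ys" by simp
  then show ?case using Nil.prems(5,6) by (intro exI[of _ p]) simp
next
  case (Cons i xs)
  define C1 where "C1 = greedy_step v \<pi> tb C i"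
  have st: "finite C1 \<and> (\<forall>S\<in>C1. S \<subseteq> set (ys @ [i])) \<and> {} \<notin> C1 \<and>
     (\<exists>q. sum q (set (ys @ [i])) = SW v C1 \<and> (\<forall>j\<in>set (ys @ [i]). v {j} \<le> q j))"
    unfolding C1_def
    by (rule step_inv[where \<pi>=\<pi> and ys=ys and i=i and zs=xs and tb=tb and C=C and p=p and v=v, OF Cons.prems(1) assms(1) tb Cons.prems(2) Cons.prems(3) Cons.prems(4) Cons.prems(5) Cons.prems(6) v0])
  have st1: "finite C1" using st by (rule conjunct1)
  have st2: "\<forall>S\<in>C1. S \<subseteq> set (ys @ [i])" using st[THEN conjunct2] by (rule conjunct1)
  have st3: "{} \<notin> C1" using st[THEN conjunct2, THEN conjunct2] by (rule conjunct1)
  have ex: "\<exists>q. sum q (set (ys @ [i])) = SW v C1 \<and> (\<forall>j\<in>set (ys @ [i]). v {j} \<le> q j)"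
    using st[THEN conjunct2, THEN conjunct2] by (rule conjunct2)
  from ex obtain q where qq: "sum q (set (ys @ [i])) = SW v C1 \<and> (\<forall>j\<in>set (ys @ [i]). v {j} \<le> q j)" ..
  have e: "\<pi> = (ys @ [i]) @ xs" using Cons.prems(1) by simp
  have "\<exists>q. sum q (set \<pi>) = SW v (greedy_run v \<pi> tb C1 xs) \<and> (\<forall>j\<in>set \<pi>. v {j} \<le> q j)"
    by (rule Cons.IH[OF e st1 st2 st3 qq[THEN conjunct1] qq[THEN conjunct2]])
  then show ?case unfolding C1_def by simp
qed

lemma vc_bnd:
  assumes "valid_cf mn mx n v" "S \<noteq> {}" "S \<subseteq> players n"
  shows "mn \<le> v S" "v S \<le> mx"
proof -
  have "\<forall>S T. S \<noteq> {} \<and> S \<subseteq> T \<and> T \<subseteq> players n \<longrightarrow> mn \<le> v S \<and> v S \<le> v T \<and> v T \<le> mx"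
    using assms(1) unfolding valid_cf_def by (rule conjunct2)
  then have "mn \<le> v S \<and> v S \<le> v S \<and> v S \<le> mx" using assms(2,3) by blast
  then show "mn \<le> v S" "v S \<le> mx" by auto
qed

lemma lower_bound:
  assumes mn: "0 < mn" and mx: "2 * mn \<le> mx" and vc: "valid_cf mn mx n v"
    and ao: "arrival_order n \<pi>" and n1: "n \<ge> 1" and tb: "valid_tb tb"
  shows "2 * mn / mx \<le> SW v (greedy_cs v \<pi> tb) / OPT v n"
proof -
  define SWg where "SWg = SW v (greedy_cs v \<pi> tb)"
  have v0: "v {} = 0" using vc by (simp add: valid_cf_def)
  have setp: "set \<pi> = players n" "distinct \<pi>" using ao by (auto simp: arrival_order_def)
  obtain q where q: "sum q (set \<pi>) = SWg" "\<forall>j\<in>set \<pi>. v {j} \<le> q j"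
    using run_inv[where \<pi>=\<pi> and tb=tb and v=v and ys="[]" and xs=\<pi> and C="{}" and p="\<lambda>_. 0", OF setp(2) tb v0]
    unfolding SWg_def greedy_cs_def by (simp add: SW_def) blast
  have vsing: "mn \<le> v {j}" if "j \<in> players n" for j
    using vc_bnd[OF vc, of "{j}"] that by simp
  have qge: "mn \<le> q j" if jp: "j \<in> players n" for j
  proof -
    have "v {j} \<le> q j" using q(2) jp unfolding setp(1) by blast
    then show ?thesis using vsing[OF jp] by linarith
  qed
  have finP: "finite (players n)" by (simp add: players_def)
  have neP: "players n \<noteq> {}" using n1 by (auto simp: players_def)
  define K where "K = mx / (2 * mn)"
  have K1: "1 \<le> K" using mn mx by (simp add: K_def)
  have fin: "finite {C. partition_on (players n) C}"
    using finP by (rule finitely_many_partition_on)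
  have "OPT v n \<in> SW v ` {C. partition_on (players n) C}"
    unfolding OPT_def using fin partition_on_space[OF neP] by (intro Max_in) auto
  then obtain Cs where Cs: "partition_on (players n) Cs" "OPT v n = SW v Cs" by auto
  have finCs: "finite Cs" using finite_elements[OF finP Cs(1)] .
  have Bsub: "B \<subseteq> players n" if "B \<in> Cs" for B using Cs(1) that by (auto simp: partition_on_def)
  have Bne: "B \<noteq> {}" if "B \<in> Cs" for B using Cs(1) that by (auto simp: partition_on_def)
  have Bfin: "finite B" if "B \<in> Cs" for B using Bsub[OF that] finP finite_subset by blast
  have blk: "v B \<le> K * sum q B" if B: "B \<in> Cs" for B
  proof (cases "card B = 1")
    case True
    then obtain j where j: "B = {j}" by (rule card_1_singletonE)
    have jp: "j \<in> players n" using Bsub[OF B] j by simp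
    have vq: "v {j} \<le> q j" using q(2) jp unfolding setp(1) by blast
    have qj: "mn \<le> q j" by (rule qge[OF jp])
    have "1 * q j \<le> K * q j" using K1 qj mn by (intro mult_right_mono) auto
    then have "v {j} \<le> K * q j" using vq by simp
    then show ?thesis using j by simp
  next
    case False
    then have c2: "2 \<le> card B" using Bne[OF B] Bfin[OF B] by (cases "card B") auto
    have "(\<Sum>i\<in>B. mn) \<le> sum q B"
    proof (rule sum_mono)
      fix i assume "i \<in> B"
      then have "i \<in> players n" using Bsub[OF B] by blast
      then show "mn \<le> q i" by (rule qge)
    qed
    then have "real (card B) * mn \<le> sum q B" by simp
    moreover have "2 * mn \<le> real (card B) * mn" using c2 mn by simp
    ultimately have s2: "2 * mn \<le> sum q B" by linarith
    have "v B \<le> mx" using vc_bnd[OF vc Bne[OF B] Bsub[OF B]] by simp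
    also have "mx = K * (2 * mn)" using mn by (simp add: K_def)
    also have "\<dots> \<le> K * sum q B" using s2 K1 by (intro mult_left_mono) auto
    finally show ?thesis .
  qed
  have "OPT v n = (\<Sum>B\<in>Cs. v B)" using Cs(2) by (simp add: SW_def)
  also have "\<dots> \<le> (\<Sum>B\<in>Cs. K * sum q B)" by (intro sum_mono blk)
  also have "\<dots> = K * (\<Sum>B\<in>Cs. sum q B)" by (simp add: sum_distrib_left)
  also have "(\<Sum>B\<in>Cs. sum q B) = sum q (\<Union>Cs)"
  proof -
    have bf: "\<forall>A\<in>Cs. finite A" using Bfin by blast
    have dj: "\<forall>A\<in>Cs. \<forall>B\<in>Cs. A \<noteq> B \<longrightarrow> A \<inter> B = {}"
      using partition_onD2[OF Cs(1)] unfolding pairwise_def disjnt_def by blast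
    show ?thesis using sum.Union_disjoint[OF bf dj, of q] by simp
  qed
  also have "\<Union>Cs = players n" using Cs(1) by (simp add: partition_on_def)
  finally have optle: "OPT v n \<le> K * SWg" using q(1) setp by simp
  have "0 < (\<Sum>B\<in>Cs. v B)"
  proof (rule sum_pos)
    show "Cs \<noteq> {}" using Cs(1) neP by (auto simp: partition_on_def)
    show "0 < v B" if "B \<in> Cs" for B
    proof -
      have "mn \<le> v B" using vc_bnd[OF vc Bne[OF that] Bsub[OF that]] by simp
      then show ?thesis using mn by linarith
    qed
  qed (rule finCs)
  then have optpos: "0 < OPT v n" using Cs(2) by (simp add: SW_def)
  have "2 * mn * OPT v n \<le> 2 * mn * (K * SWg)" using optle mn by simp
  also have "2 * mn * (K * SWg) = mx * SWg" using mn by (simp add: K_def)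
  finally have a: "2 * mn * OPT v n \<le> mx * SWg" .
  have mxp: "0 < mx" using mn mx by linarith
  have "2 * mn / mx * OPT v n = (2 * mn * OPT v n) / mx" by simp
  also have "\<dots> \<le> (mx * SWg) / mx" using a mxp by (intro divide_right_mono) auto
  also have "\<dots> = SWg" using mxp by simp
  finally have "2 * mn / mx * OPT v n \<le> SWg" .
  then show ?thesis unfolding SWg_def[symmetric] using optpos by (simp add: pos_le_divide_eq)
qed


definition hh :: "real \<Rightarrow> real \<Rightarrow> nat \<Rightarrow> real" where
  "hh mn \<eta> k = real k * (mn + \<eta>) - \<eta>"

definition vcon :: "real \<Rightarrow> real \<Rightarrow> real \<Rightarrow> nat \<Rightarrow> nat set \<Rightarrow> real" where
  "vcon mn mx \<eta> s S = (if S = {} then 0 else if (\<exists>i<s. i \<in> S \<and> i + s \<in> S) then mx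
     else if S \<inter> {..<s} = {} then mn else hh mn \<eta> (card (S \<inter> {..<s})))"

lemma hh_mono: "0 < mn \<Longrightarrow> 0 < \<eta> \<Longrightarrow> k \<le> l \<Longrightarrow> hh mn \<eta> k \<le> hh mn \<eta> l"
  unfolding hh_def by (intro diff_right_mono mult_right_mono) auto

lemma hh_ge: "0 < mn \<Longrightarrow> 0 < \<eta> \<Longrightarrow> 1 \<le> k \<Longrightarrow> mn \<le> hh mn \<eta> k"
  using hh_mono[of mn \<eta> 1 k] by (simp add: hh_def)

lemma vcon_p: "S \<noteq> {} \<Longrightarrow> (\<exists>i<s. i \<in> S \<and> i + s \<in> S) \<Longrightarrow> vcon mn mx \<eta> s S = mx"
  unfolding vcon_def by (simp only: if_True if_False simp_thms)
lemma vcon_e: "S \<noteq> {} \<Longrightarrow> \<not> (\<exists>i<s. i \<in> S \<and> i + s \<in> S) \<Longrightarrow> S \<inter> {..<s} = {} \<Longrightarrow> vcon mn mx \<eta> s S = mn"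
  unfolding vcon_def by (simp only: if_True if_False simp_thms)
lemma vcon_h: "S \<noteq> {} \<Longrightarrow> \<not> (\<exists>i<s. i \<in> S \<and> i + s \<in> S) \<Longrightarrow> S \<inter> {..<s} \<noteq> {} \<Longrightarrow>
   vcon mn mx \<eta> s S = hh mn \<eta> (card (S \<inter> {..<s}))"
  unfolding vcon_def by (simp only: if_True if_False simp_thms)

lemma vcon_valid:
  assumes mn: "0 < mn" and eta: "0 < \<eta>" and s: "1 \<le> s" and hs: "hh mn \<eta> s \<le> mx"
  shows "valid_cf mn mx (2 * s) (vcon mn mx \<eta> s)"
proof -
  have mnmx: "mn \<le> mx" using hh_ge[OF mn eta s] hs by simp
  have cardle: "card (S \<inter> {..<s}) \<le> s" for S
    using card_mono[of "{..<s}" "S \<inter> {..<s}"] by auto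
  have hbnd: "hh mn \<eta> (card (S \<inter> {..<s})) \<le> mx" for S
    using hh_mono[OF mn eta cardle] hs order_trans by blast
  have hge: "mn \<le> hh mn \<eta> (card (S \<inter> {..<s}))" if "S \<inter> {..<s} \<noteq> {}" for S
  proof -
    have "card (S \<inter> {..<s}) \<noteq> 0" using that by simp
    then have "1 \<le> card (S \<inter> {..<s})" by linarith
    then show ?thesis using hh_ge[OF mn eta] by blast
  qed
  have bnd: "mn \<le> vcon mn mx \<eta> s S \<and> vcon mn mx \<eta> s S \<le> mx" if "S \<noteq> {}" for S
  proof (cases "\<exists>i<s. i \<in> S \<and> i + s \<in> S")
    case True then show ?thesis using vcon_p[OF that True] mnmx by simp
  next
    case False
    show ?thesis
    proof (cases "S \<inter> {..<s} = {}")
      case True then show ?thesis using vcon_e[OF that False True] mnmx by simp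
    next
      case F2: False
      then show ?thesis using vcon_h[OF that False F2] hbnd hge[OF F2] by simp
    qed
  qed
  have mono: "vcon mn mx \<eta> s S \<le> vcon mn mx \<eta> s T" if "S \<noteq> {}" "S \<subseteq> T" for S T
  proof -
    have T: "T \<noteq> {}" using that by auto
    show ?thesis
    proof (cases "\<exists>i<s. i \<in> T \<and> i + s \<in> T")
      case p: True
      then show ?thesis using bnd[OF that(1)] vcon_p[OF T p] by simp
    next
      case np: False
      then have npS: "\<not> (\<exists>i<s. i \<in> S \<and> i + s \<in> S)" using that by blast
      show ?thesis
      proof (cases "S \<inter> {..<s} = {}")
        case True
        show ?thesis using vcon_e[OF that(1) npS True] bnd[OF T] by simp
      next
        case False
        then have F2: "T \<inter> {..<s} \<noteq> {}" using that by auto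
        have "card (S \<inter> {..<s}) \<le> card (T \<inter> {..<s})" using that by (intro card_mono) auto
        then show ?thesis using hh_mono[OF mn eta] vcon_h[OF that(1) npS False] vcon_h[OF T np F2] by simp
      qed
    qed
  qed
  have v0: "vcon mn mx \<eta> s {} = 0" by (simp add: vcon_def)
  have r: "mn \<le> vcon mn mx \<eta> s S \<and> vcon mn mx \<eta> s S \<le> vcon mn mx \<eta> s T \<and> vcon mn mx \<eta> s T \<le> mx"
    if a: "S \<noteq> {} \<and> S \<subseteq> T \<and> T \<subseteq> players (2 * s)" for S T
  proof -
    have "T \<noteq> {}" using a by auto
    then show ?thesis using bnd mono a by blast
  qed
  show ?thesis unfolding valid_cf_def using v0 r by blast
qed


lemma vcon_single: "1 \<le> s \<Longrightarrow> vcon mn mx \<eta> s {t} = mn"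
proof -
  assume s: "1 \<le> s"
  have np: "\<not> (\<exists>i<s. i \<in> {t} \<and> i + s \<in> {t})" using s by auto
  show ?thesis
  proof (cases "t < s")
    case True
    then have "{t} \<inter> {..<s} = {t}" by auto
    then show ?thesis using vcon_h[of "{t}" s mn mx \<eta>] np by (simp add: hh_def)
  next
    case False
    then have "{t} \<inter> {..<s} = {}" by auto
    then show ?thesis using vcon_e[of "{t}" s mn mx \<eta>] np by simp
  qed
qed

lemma vcon_A: "1 \<le> k \<Longrightarrow> k \<le> s \<Longrightarrow> vcon mn mx \<eta> s {0..<k} = hh mn \<eta> k"
proof -
  assume k: "1 \<le> k" "k \<le> s"
  have np: "\<not> (\<exists>i<s. i \<in> {0..<k} \<and> i + s \<in> {0..<k})" using k by auto
  have e: "{0..<k} \<inter> {..<s} = {0..<k}" using k by auto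
  have ne: "{0..<k} \<noteq> ({}::nat set)" using k by auto
  show ?thesis using vcon_h[OF ne np] e ne by simp
qed

lemma vcon_Ai: "j < s \<Longrightarrow> vcon mn mx \<eta> s ({0..<s} \<union> {s + j}) = mx"
proof -
  assume j: "j < s"
  have p: "\<exists>i<s. i \<in> {0..<s} \<union> {s + j} \<and> i + s \<in> {0..<s} \<union> {s + j}"
    using j by (intro exI[of _ j]) auto
  show ?thesis by (rule vcon_p) (use p in auto)
qed

lemma vcon_BB: "s \<le> t \<Longrightarrow> s \<le> i \<Longrightarrow> vcon mn mx \<eta> s ({t} \<union> {i}) = mn"
proof -
  assume a: "s \<le> t" "s \<le> i"
  have np: "\<not> (\<exists>k<s. k \<in> {t} \<union> {i} \<and> k + s \<in> {t} \<union> {i})" using a by auto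
  have e: "({t} \<union> {i}) \<inter> {..<s} = {}" using a by auto
  show ?thesis by (rule vcon_e) (use np e in auto)
qed

lemma vcon_pair: "i < s \<Longrightarrow> vcon mn mx \<eta> s {i, i + s} = mx"
  by (rule vcon_p) auto

lemma vcon_empty: "vcon mn mx \<eta> s {} = 0"
  by (simp add: vcon_def)

lemma before_upt:
  assumes "i < m"
  shows "before [0..<m] i = {0..<i}"
proof -
  have "[0..<m] = [0..<i] @ [i..<m]" using upt_add_eq_append[of 0 i "m - i"] assms by simp
  also have "[i..<m] = i # [Suc i..<m]" using assms by (simp add: upt_conv_Cons)
  finally have e: "[0..<m] = [0..<i] @ i # [Suc i..<m]" .
  have "distinct ([0..<i] @ i # [Suc i..<m])" using e[symmetric] by (metis distinct_upt)
  then show ?thesis using before_split e by (metis atLeastLessThan_upt)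
qed

lemma step_unique:
  assumes tb: "valid_tb tb" and X: "X \<in> C \<union> {{}}"
    and lt: "\<And>S. S \<in> C \<union> {{}} \<Longrightarrow> S \<noteq> X \<Longrightarrow> amc v \<pi> (S \<union> {i}) i < amc v \<pi> (X \<union> {i}) i"
  shows "greedy_step v \<pi> tb C i = (C - {X}) \<union> {X \<union> {i}}"
proof -
  define val where "val = (\<lambda>S. amc v \<pi> (S \<union> {i}) i)"
  have A: "{S \<in> C \<union> {{}}. \<forall>S'\<in>C \<union> {{}}. val S' \<le> val S} = {X}"
  proof (rule set_eqI, rule iffI)
    fix S assume "S \<in> {S \<in> C \<union> {{}}. \<forall>S'\<in>C \<union> {{}}. val S' \<le> val S}"
    then have S: "S \<in> C \<union> {{}}" "val X \<le> val S" using X by auto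
    show "S \<in> {X}"
    proof (rule ccontr)
      assume "S \<notin> {X}"
      then have "val S < val X" using lt[OF S(1)] unfolding val_def by auto
      then show False using S(2) by simp
    qed
  next
    fix S assume "S \<in> {X}"
    then have SX: "S = X" by simp
    have "\<forall>S'\<in>C \<union> {{}}. val S' \<le> val X"
    proof
      fix S' assume S': "S' \<in> C \<union> {{}}"
      show "val S' \<le> val X"
      proof (cases "S' = X")
        case True then show ?thesis by simp
      next
        case False then show ?thesis using lt[OF S' False] unfolding val_def by simp
      qed
    qed
    then show "S \<in> {S \<in> C \<union> {{}}. \<forall>S'\<in>C \<union> {{}}. val S' \<le> val S}" using SX X by simp
  qed
  have "tb C i {X} = X" using tb unfolding valid_tb_def by (metis empty_not_insert singletonD)
  then show ?thesis unfolding greedy_step_def Let_def val_def[symmetric] A by simp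
qed

definition pis :: "nat \<Rightarrow> nat list" where "pis s = upt 0 (2 * s)"

lemma before_pis: "i < 2 * s \<Longrightarrow> before (pis s) i = {0..<i}"
  unfolding pis_def by (rule before_upt)

lemma phase1:
  assumes tb: "valid_tb tb" and mn: "0 < mn" and eta: "0 < \<eta>" and s: "1 \<le> s"
  shows "k \<le> s \<Longrightarrow> greedy_run (vcon mn mx \<eta> s) (pis s) tb {} [0..<k] = (if k = 0 then {} else {{0..<k}})"
proof (induction k)
  case 0
  then show ?case by simp
next
  case (Suc k)
  define v where "v = vcon mn mx \<eta> s"
  have ks: "k < s" using Suc.prems by simp
  have IH: "greedy_run v (pis s) tb {} [0..<k] = (if k = 0 then {} else {{0..<k}})"
    using Suc.IH ks v_def by simp
  have bef: "before (pis s) k = {0..<k}" using ks by (intro before_pis) simp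
  have "greedy_run v (pis s) tb {} [0..<Suc k] = greedy_step v (pis s) tb (greedy_run v (pis s) tb {} [0..<k]) k"
    by (simp add: greedy_run_append)
  also have "\<dots> = {{0..<Suc k}}"
  proof (cases "k = 0")
    case True
    have "greedy_step v (pis s) tb {} k = ({} - {{}}) \<union> {{} \<union> {k}}"
      by (rule step_unique[OF tb]) auto
    then show ?thesis using IH True by simp
  next
    case False
    have a0: "amc v (pis s) ({} \<union> {k}) k = mn"
      using amc_simp[of "{}" "(pis s)" k v] vcon_single[OF s] vcon_empty v_def by simp
    have a1: "amc v (pis s) ({0..<k} \<union> {k}) k = mn + \<eta>"
    proof -
      have e: "{0..<k} \<union> {k} = {0..<Suc k}" by auto
      have h1: "amc v (pis s) ({0..<k} \<union> {k}) k = v ({0..<k} \<union> {k}) - v {0..<k}"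
        using amc_simp[of "{0..<k}" "pis s" k v] bef by simp
      have h2: "v ({0..<k} \<union> {k}) = hh mn \<eta> (Suc k)" unfolding e using vcon_A[of "Suc k" s] ks v_def by simp
      have h3: "v {0..<k} = hh mn \<eta> k" using vcon_A[of k s] ks False v_def by simp
      show ?thesis using h1 h2 h3 by (simp add: hh_def algebra_simps)
    qed
    have "greedy_step v (pis s) tb {{0..<k}} k = ({{0..<k}} - {{0..<k}}) \<union> {{0..<k} \<union> {k}}"
    proof (rule step_unique[OF tb])
      fix S assume "S \<in> {{0..<k}} \<union> {{}}" "S \<noteq> {0..<k}"
      then have "S = {}" by auto
      then show "amc v (pis s) (S \<union> {k}) k < amc v (pis s) ({0..<k} \<union> {k}) k"
        using a0 a1 eta by simp
    qed simp
    also have "\<dots> = {{0..<Suc k}}" by auto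
    finally show ?thesis using IH False by simp
  qed
  finally show ?case using v_def by simp
qed

lemma phase2:
  assumes tb: "valid_tb tb" and mn: "0 < mn" and eta: "0 < \<eta>" and s: "1 \<le> s"
    and hs: "mx - mn < hh mn \<eta> s"
  shows "j \<le> s \<Longrightarrow> greedy_run (vcon mn mx \<eta> s) (pis s) tb {} [0..<s+j] =
     insert {0..<s} ((\<lambda>t. {t}) ` {s..<s+j})"
proof (induction j)
  case 0
  have "s \<noteq> 0" using assms(4) by simp
  then show ?case using phase1[OF tb mn eta s, of s] by simp
next
  case (Suc j)
  define v where "v = vcon mn mx \<eta> s"
  define C where "C = insert {0..<s} ((\<lambda>t. {t}) ` {s..<s+j})"
  have js: "j < s" using Suc.prems by simp
  have IH: "greedy_run v (pis s) tb {} [0..<s+j] = C"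
    using Suc.IH js v_def C_def by simp
  have bef: "before (pis s) (s+j) = {0..<s+j}" using js by (intro before_pis) simp
  have a0: "amc v (pis s) ({} \<union> {s+j}) (s+j) = mn"
    using amc_simp[of "{}" "(pis s)" "s+j" v] vcon_single[OF s] vcon_empty v_def by simp
  have lt: "amc v (pis s) (S \<union> {s+j}) (s+j) < amc v (pis s) ({} \<union> {s+j}) (s+j)"
    if S: "S \<in> C \<union> {{}}" "S \<noteq> {}" for S
  proof -
    have "S = {0..<s} \<or> (\<exists>t. s \<le> t \<and> t < s + j \<and> S = {t})" using S unfolding C_def by auto
    then show ?thesis
    proof
      assume S0: "S = {0..<s}"
      have "amc v (pis s) (S \<union> {s+j}) (s+j) = v ({0..<s} \<union> {s+j}) - v {0..<s}"
        using amc_simp[of "{0..<s}" "(pis s)" "s+j" v] bef S0 by simp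
      also have "\<dots> = mx - hh mn \<eta> s" using vcon_Ai[OF js] vcon_A[of s s] s v_def by simp
      finally show ?thesis using a0 hs by simp
    next
      assume "\<exists>t. s \<le> t \<and> t < s + j \<and> S = {t}"
      then obtain t where t: "s \<le> t" "t < s + j" "S = {t}" by blast
      have "amc v (pis s) (S \<union> {s+j}) (s+j) = v ({t} \<union> {s+j}) - v {t}"
        using amc_simp[of "{t}" "(pis s)" "s+j" v] bef t by simp
      also have "\<dots> = 0" using vcon_BB[of s t "s+j"] vcon_single[OF s] t v_def by simp
      finally show ?thesis using a0 mn by simp
    qed
  qed
  have "greedy_run v (pis s) tb {} [0..<s + Suc j] = greedy_step v (pis s) tb C (s+j)"
    using IH by (simp add: greedy_run_append)
  also have "\<dots> = (C - {{}}) \<union> {{} \<union> {s+j}}"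
    by (rule step_unique[OF tb]) (use lt in auto)
  also have "\<dots> = insert {0..<s} ((\<lambda>t. {t}) ` {s..<s + Suc j})"
    unfolding C_def using assms(4) by auto
  finally show ?case using v_def by simp
qed


lemma construction:
  assumes tb: "valid_tb tb" and mn: "0 < mn" and eta: "0 < \<eta>" and s2: "2 \<le> s"
    and hs: "hh mn \<eta> s \<le> mx" and hs2: "mx - mn < hh mn \<eta> s"
  shows "SW (vcon mn mx \<eta> s) (greedy_cs (vcon mn mx \<eta> s) (pis s) tb) / OPT (vcon mn mx \<eta> s) (2 * s)
     \<le> (hh mn \<eta> s + real s * mn) / (real s * mx)"
proof -
  define v where "v = vcon mn mx \<eta> s"
  have s: "1 \<le> s" using s2 by simp
  have mxp: "0 < mx" using hh_ge[OF mn eta s] hs mn by linarith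
  have g: "greedy_cs v (pis s) tb = insert {0..<s} ((\<lambda>t. {t}) ` {s..<s+s})"
  proof -
    have "greedy_cs v (pis s) tb = greedy_run v (pis s) tb {} [0..<s+s]"
      unfolding greedy_cs_def pis_def by (simp add: mult_2)
    then show ?thesis using phase2[OF tb mn eta s hs2, of s] v_def by simp
  qed
  have notin: "{0..<s} \<notin> (\<lambda>t. {t}) ` {s..<s+s}"
  proof
    assume "{0..<s} \<in> (\<lambda>t. {t}) ` {s..<s+s}"
    then obtain t where "s \<le> t" "{0..<s} = {t}" by auto
    moreover have "(0::nat) \<in> {0..<s}" using s by simp
    ultimately have "(0::nat) \<in> {t}" by simp
    then show False using \<open>s \<le> t\<close> s by simp
  qed
  have SWg: "SW v (greedy_cs v (pis s) tb) = hh mn \<eta> s + real s * mn"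
  proof -
    have "SW v (greedy_cs v (pis s) tb) = v {0..<s} + sum v ((\<lambda>t. {t}) ` {s..<s+s})"
      unfolding g SW_def using notin by (simp add: sum.insert)
    also have "sum v ((\<lambda>t. {t}) ` {s..<s+s}) = (\<Sum>t\<in>{s..<s+s}. v {t})"
      by (subst sum.reindex) (auto simp: inj_on_def)
    also have "\<dots> = (\<Sum>t\<in>{s..<s+s}. mn)" using vcon_single[OF s] v_def by simp
    also have "\<dots> = real s * mn" by simp
    also have "v {0..<s} = hh mn \<eta> s" using vcon_A[OF s] v_def by simp
    finally show ?thesis .
  qed
  define P where "P = (\<lambda>i. {i, i + s}) ` {0..<s}"
  have injP: "inj_on (\<lambda>i. {i, i + s}) {0..<s}"
  proof (rule inj_onI)
    fix a b assume a: "a \<in> {0..<s}" and b: "b \<in> {0..<s}" and e: "{a, a + s} = {b, b + s}"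
    then have "a \<in> {b, b + s}" by auto
    then show "a = b" using a by auto
  qed
  have partP: "partition_on (players (2 * s)) P"
  proof (rule partition_onI)
    show "\<Union>P = players (2 * s)"
    proof
      show "\<Union>P \<subseteq> players (2 * s)" unfolding P_def players_def by auto
      show "players (2 * s) \<subseteq> \<Union>P"
      proof
        fix x assume "x \<in> players (2 * s)"
        then have x: "x < 2 * s" by (simp add: players_def)
        show "x \<in> \<Union>P"
        proof (cases "x < s")
          case True then show ?thesis unfolding P_def by auto
        next
          case False
          then have "x - s \<in> {0..<s}" "x = (x - s) + s" using x by auto
          then show ?thesis unfolding P_def by blast
        qed
      qed
    qed
    show "disjnt p q" if pP: "p \<in> P" and qP: "q \<in> P" and pq: "p \<noteq> q" for p q
    proof -
      obtain a where a: "a < s" "p = {a, a + s}" using pP unfolding P_def by auto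
      obtain b where b: "b < s" "q = {b, b + s}" using qP unfolding P_def by auto
      have "a \<noteq> b" using a b pq by auto
      then show ?thesis using a b unfolding disjnt_def by auto
    qed
    show "{} \<notin> P" unfolding P_def by auto
  qed
  have SWP: "SW v P = real s * mx"
  proof -
    have "SW v P = (\<Sum>i\<in>{0..<s}. v {i, i + s})" unfolding SW_def P_def
      using sum.reindex[OF injP, of v] by simp
    also have "\<dots> = (\<Sum>i\<in>{0..<s}. mx)" using vcon_pair v_def by (intro sum.cong) auto
    finally show ?thesis by simp
  qed
  have finP: "finite {C. partition_on (players (2 * s)) C}"
    by (rule finitely_many_partition_on) (simp add: players_def)
  have optge: "real s * mx \<le> OPT v (2 * s)"
    unfolding OPT_def using SWP partP finP by (metis (mono_tags, lifting) Max_ge finite_imageI image_eqI mem_Collect_eq)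
  have pos: "0 < real s * mx" using s mxp by simp
  have swnn: "0 \<le> hh mn \<eta> s + real s * mn" using hh_ge[OF mn eta s] mn by simp
  have "SW v (greedy_cs v (pis s) tb) / OPT v (2 * s) \<le> (hh mn \<eta> s + real s * mn) / (real s * mx)"
    unfolding SWg using optge pos swnn by (intro divide_left_mono) auto
  then show ?thesis using v_def by simp
qed

lemma mk_V_ge2:
  assumes mn: "0 < mn" and mx: "2 * mn \<le> mx" and vc: "valid_cf mn mx n v"
  shows "V_ge2 mn mx n v"
proof -
  define d where "d = nat \<lfloor>mx / mn\<rfloor>"
  have r2: "2 \<le> mx / mn" using mn mx by (simp add: le_divide_eq)
  have fl: "2 \<le> \<lfloor>mx / mn\<rfloor>" using r2 by linarith
  have dd: "real d = real_of_int \<lfloor>mx / mn\<rfloor>" unfolding d_def using fl by simp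
  have d2: "2 \<le> d" unfolding d_def using fl by linarith
  have a: "real_of_int \<lfloor>mx / mn\<rfloor> \<le> mx / mn" by simp
  have b: "mx / mn < real_of_int \<lfloor>mx / mn\<rfloor> + 1" by simp
  have "real d * mn \<le> mx" using a dd mn by (simp add: le_divide_eq)
  moreover have "mx < (real d + 1) * mn"
  proof -
    have "mx / mn * mn < (real_of_int \<lfloor>mx / mn\<rfloor> + 1) * mn" using b mn by (rule mult_strict_right_mono)
    then show ?thesis using mn dd by simp
  qed
  ultimately show ?thesis unfolding V_ge2_def V_delta_def using d2 vc by blast
qed


theorem theorem4:
  fixes mn mx :: real
    and tb :: "nat set set \<Rightarrow> nat \<Rightarrow> nat set set \<Rightarrow> nat set"
  assumes "0 < mn" and "mn \<le> mx" and "2 * mn \<le> mx"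
    and "valid_tb tb"
  shows "comp_ratio_ge2 mn mx tb = 2 * mn / mx"
proof -
  note mn = assms(1) and mx = assms(3) and tb = assms(4)
  have mxp: "0 < mx" using mn mx by linarith
  define c where "c = 2 * mn / mx"
  define R where "R = {SW v (greedy_cs v \<pi> tb) / OPT v n | n v \<pi>.
            n \<ge> 1 \<and> V_ge2 mn mx n v \<and> arrival_order n \<pi>}"
  have memR: "SW v (greedy_cs v \<pi> tb) / OPT v n \<in> R"
    if "n \<ge> 1" "V_ge2 mn mx n v" "arrival_order n \<pi>" for n v \<pi>
    unfolding R_def using that by blast
  have low: "c \<le> x" if x: "x \<in> R" for x
  proof -
    obtain n v \<pi> where o: "x = SW v (greedy_cs v \<pi> tb) / OPT v n" "n \<ge> 1" "V_ge2 mn mx n v"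
      "arrival_order n \<pi>" using x unfolding R_def by blast
    have vc: "valid_cf mn mx n v" using o(3) unfolding V_ge2_def V_delta_def by blast
    show ?thesis unfolding o(1) c_def by (rule lower_bound[OF mn mx vc o(4) o(2) tb])
  qed
  have up: "\<exists>x\<in>R. x \<le> c + e" if e: "0 < e" for e
  proof (cases "mx = 2 * mn")
    case True
    define v1 where "v1 = (\<lambda>S::nat set. if S = {} then 0 else mn)"
    have p1: "players 1 = {0}" by (auto simp: players_def)
    have vc: "valid_cf mn mx 1 v1"
      unfolding valid_cf_def v1_def using assms(2) by auto
    have ao: "arrival_order 1 [0]" unfolding arrival_order_def players_def by auto
    have g: "greedy_cs v1 [0] tb = {{0}}"
    proof -
      have "greedy_cs v1 [0] tb = greedy_step v1 [0] tb {} 0" by (simp add: greedy_cs_def)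
      also have "\<dots> = ({} - {{}}) \<union> {{} \<union> {0}}" by (rule step_unique[OF tb]) auto
      finally show ?thesis by simp
    qed
    have sw: "SW v1 (greedy_cs v1 [0] tb) = mn" unfolding SW_def g by (simp add: v1_def)
    have finP: "finite {C. partition_on (players 1) C}"
      by (rule finitely_many_partition_on) (simp add: players_def)
    have pp: "partition_on (players 1) {{0}}" unfolding p1 by (rule partition_on_space) simp
    have "SW v1 {{0}} \<le> OPT v1 1" unfolding OPT_def using finP pp by (intro Max_ge) auto
    then have opt: "mn \<le> OPT v1 1" by (simp add: SW_def v1_def)
    have "SW v1 (greedy_cs v1 [0] tb) / OPT v1 1 \<le> 1" unfolding sw using opt mn by simp
    also have "1 = c" unfolding c_def True using mn by simp
    finally have le: "SW v1 (greedy_cs v1 [0] tb) / OPT v1 1 \<le> c + e" using e by simp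
    have "SW v1 (greedy_cs v1 [0] tb) / OPT v1 1 \<in> R"
      by (rule memR) (use mk_V_ge2[OF mn mx vc] ao in auto)
    then show ?thesis using le by blast
  next
    case False
    then have mx2: "2 * mn < mx" using mx by simp
    define r where "r = mx / mn"
    have r2: "2 < r" unfolding r_def using mx2 mn by (simp add: less_divide_eq)
    have rmn: "r * mn = mx" unfolding r_def using mn by simp
    define ci where "ci = \<lceil>r\<rceil>"
    have c1: "r \<le> real_of_int ci" "real_of_int ci - 1 < r" unfolding ci_def using ceiling_correct by auto
    have ci3: "3 \<le> ci" using c1 r2 by linarith
    define s where "s = nat (ci - 1)"
    have sreal: "real s = real_of_int ci - 1" unfolding s_def using ci3 by simp
    have s2: "2 \<le> s" unfolding s_def using ci3 by linarith
    have s1: "1 \<le> s" using s2 by simp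
    have sr1: "1 \<le> real s - 1" using s2 by simp
    have smn_lt: "real s * mn < mx"
    proof -
      have "real s < r" using sreal c1 by linarith
      then have "real s * mn < r * mn" using mn by (rule mult_strict_right_mono)
      then show ?thesis using rmn by simp
    qed
    have smn_ge: "mx - mn \<le> real s * mn"
    proof -
      have "r - 1 \<le> real s" using sreal c1 by linarith
      then have "(r - 1) * mn \<le> real s * mn" using mn by (intro mult_right_mono) auto
      then show ?thesis using rmn by (simp add: algebra_simps)
    qed
    define \<eta> where "\<eta> = min ((mx - real s * mn) / (real s - 1)) (e * mx / 2)"
    have eta: "0 < \<eta>" unfolding \<eta>_def using smn_lt sr1 e mxp by simp
    have eta1: "\<eta> * (real s - 1) \<le> mx - real s * mn"
    proof -
      have "\<eta> \<le> (mx - real s * mn) / (real s - 1)" unfolding \<eta>_def by (rule min.cobounded1)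
      then show ?thesis using sr1 by (simp add: le_divide_eq)
    qed
    have eta2: "\<eta> \<le> e * mx / 2" unfolding \<eta>_def by (rule min.cobounded2)
    have hheq: "hh mn \<eta> s = real s * mn + (real s - 1) * \<eta>" unfolding hh_def by (simp add: algebra_simps)
    have hs: "hh mn \<eta> s \<le> mx" using hheq eta1 by (simp add: algebra_simps)
    have hs2: "mx - mn < hh mn \<eta> s"
    proof -
      have "0 < (real s - 1) * \<eta>" using sr1 eta by simp
      then show ?thesis using hheq smn_ge by linarith
    qed
    define v where "v = vcon mn mx \<eta> s"
    have rat: "SW v (greedy_cs v (pis s) tb) / OPT v (2 * s) \<le> (hh mn \<eta> s + real s * mn) / (real s * mx)"
      unfolding v_def by (rule construction[OF tb mn eta s2 hs hs2])
    have spos: "0 < real s" using s1 by simp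
    have "(hh mn \<eta> s + real s * mn) / (real s * mx) = c + ((real s - 1) / real s) * (\<eta> / mx)"
      unfolding hheq c_def using spos mxp by (simp add: field_simps)
    also have "((real s - 1) / real s) * (\<eta> / mx) \<le> 1 * (\<eta> / mx)"
    proof (rule mult_right_mono)
      show "(real s - 1) / real s \<le> 1" using spos by simp
      show "0 \<le> \<eta> / mx" using eta mxp by simp
    qed
    also have "\<eta> / mx \<le> e / 2"
    proof -
      have "\<eta> / mx \<le> (e * mx / 2) / mx" using eta2 mxp by (intro divide_right_mono) auto
      also have "\<dots> = e / 2" using mxp by simp
      finally show ?thesis .
    qed
    finally have le: "SW v (greedy_cs v (pis s) tb) / OPT v (2 * s) \<le> c + e"
      using rat e by linarith
    have vc: "valid_cf mn mx (2 * s) v" unfolding v_def by (rule vcon_valid[OF mn eta s1 hs])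
    have ao: "arrival_order (2 * s) (pis s)" by (simp add: arrival_order_def pis_def players_def)
    have "SW v (greedy_cs v (pis s) tb) / OPT v (2 * s) \<in> R"
      by (rule memR) (use mk_V_ge2[OF mn mx vc] ao s1 in auto)
    then show ?thesis using le by blast
  qed
  obtain x0 where "x0 \<in> R" using up[of 1] by auto
  then have ne: "R \<noteq> {}" by auto
  have bdd: "bdd_below R" using low unfolding bdd_below_def by blast
  have "c \<le> Inf R" using ne low by (intro cInf_greatest) auto
  moreover have "Inf R \<le> c"
  proof (rule field_le_epsilon)
    fix e :: real assume "0 < e"
    then obtain x where x: "x \<in> R" "x \<le> c + e" using up by blast
    have "Inf R \<le> x" using x(1) bdd by (rule cInf_lower)
    then show "Inf R \<le> c + e" using x(2) by linarith
  qed
  ultimately have "Inf R = c" by linarith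
  moreover have "comp_ratio_ge2 mn mx tb = Inf R" unfolding comp_ratio_ge2_def R_def by simp
  ultimately show ?thesis unfolding c_def by simp
qed

end
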